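(* Let $G$ be a graph all of whose $\operatorname{IR}(G)$-sets are independent. If the $\operatorname{IR}$-graph $H=G(\operatorname{IR})$ is connected and has at least three vertices, then $H$ contains a triangle or an induced $C_4$.
   Context: All graphs are finite and simple. For $G=(V,E)$, $D\subseteq V$, $v\in D$: $\operatorname{PN}(v,D)=N[v]-N[D-\{v\}]$ (closed neighbourhoods). $D$ is irredundant if $\operatorname{PN}(v,D)\neq\varnothing$ for all $v\in D$; $\operatorname{IR}(G)$ is the maximum size of an irredundant set; an $\operatorname{IR}(G)$-set is an irredundant set of that size. $G(\operatorname{IR})$ has the $\operatorname{IR}(G)$-sets as vertices, with $D\sim D'$ iff there exist $u\in D$, $v\in D'$ with $uv\in E(G)$ and $D'=(D-\{u\})\cup\{v\}$. *)

theory Defs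
  imports Main
begin

definition simple_graph :: "'a set \<Rightarrow> ('a \<Rightarrow> 'a \<Rightarrow> bool) \<Rightarrow> bool" where
  "simple_graph V E \<longleftrightarrow> finite V \<and>
     (\<forall>u v. E u v \<longrightarrow> u \<in> V \<and> v \<in> V \<and> u \<noteq> v \<and> E v u)"

definition cnbhd :: "'a set \<Rightarrow> ('a \<Rightarrow> 'a \<Rightarrow> bool) \<Rightarrow> 'a \<Rightarrow> 'a set" where
  "cnbhd V E v = {u \<in> V. u = v \<or> E v u}"

definition cnbhd_set :: "'a set \<Rightarrow> ('a \<Rightarrow> 'a \<Rightarrow> bool) \<Rightarrow> 'a set \<Rightarrow> 'a set" where
  "cnbhd_set V E S = (\<Union>v\<in>S. cnbhd V E v)"

definition PN :: "'a set \<Rightarrow> ('a \<Rightarrow> 'a \<Rightarrow> bool) \<Rightarrow> 'a \<Rightarrow> 'a set \<Rightarrow> 'a set" where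
  "PN V E v D = cnbhd V E v - cnbhd_set V E (D - {v})"

definition irredundant :: "'a set \<Rightarrow> ('a \<Rightarrow> 'a \<Rightarrow> bool) \<Rightarrow> 'a set \<Rightarrow> bool" where
  "irredundant V E D \<longleftrightarrow> D \<subseteq> V \<and> (\<forall>v\<in>D. PN V E v D \<noteq> {})"

definition IR :: "'a set \<Rightarrow> ('a \<Rightarrow> 'a \<Rightarrow> bool) \<Rightarrow> nat" where
  "IR V E = Max {card D | D. irredundant V E D}"

definition IR_set :: "'a set \<Rightarrow> ('a \<Rightarrow> 'a \<Rightarrow> bool) \<Rightarrow> 'a set \<Rightarrow> bool" where
  "IR_set V E D \<longleftrightarrow> irredundant V E D \<and> card D = IR V E"

definition IR_adj :: "'a set \<Rightarrow> ('a \<Rightarrow> 'a \<Rightarrow> bool) \<Rightarrow> 'a set \<Rightarrow> 'a set \<Rightarrow> bool" where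
  "IR_adj V E D D' \<longleftrightarrow> IR_set V E D \<and> IR_set V E D' \<and>
     (\<exists>u\<in>D. \<exists>v\<in>D'. E u v \<and> D' = (D - {u}) \<union> {v})"

definition independent :: "('a \<Rightarrow> 'a \<Rightarrow> bool) \<Rightarrow> 'a set \<Rightarrow> bool" where
  "independent E D \<longleftrightarrow> (\<forall>u\<in>D. \<forall>v\<in>D. \<not> E u v)"

definition IR_graph_connected :: "'a set \<Rightarrow> ('a \<Rightarrow> 'a \<Rightarrow> bool) \<Rightarrow> bool" where
  "IR_graph_connected V E \<longleftrightarrow>
     (\<forall>D D'. IR_set V E D \<longrightarrow> IR_set V E D' \<longrightarrow> (IR_adj V E)\<^sup>*\<^sup>* D D')"

definition IR_graph_has_triangle :: "'a set \<Rightarrow> ('a \<Rightarrow> 'a \<Rightarrow> bool) \<Rightarrow> bool" where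
  "IR_graph_has_triangle V E \<longleftrightarrow>
     (\<exists>A B C. IR_adj V E A B \<and> IR_adj V E B C \<and> IR_adj V E C A)"

definition IR_graph_has_induced_C4 :: "'a set \<Rightarrow> ('a \<Rightarrow> 'a \<Rightarrow> bool) \<Rightarrow> bool" where
  "IR_graph_has_induced_C4 V E \<longleftrightarrow>
     (\<exists>A B C D. distinct [A, B, C, D] \<and>
        IR_adj V E A B \<and> IR_adj V E B C \<and> IR_adj V E C D \<and> IR_adj V E D A \<and>
        \<not> IR_adj V E A C \<and> \<not> IR_adj V E B D)"

end

theory Submission
  imports Defs
begin

lemma indep_irr:
  assumes "simple_graph V E" "D \<subseteq> V" "independent E D"
  shows "irredundant V E D"
  unfolding irredundant_def
proof (intro conjI ballI)
  show "D \<subseteq> V" by fact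
  fix w assume w: "w \<in> D"
  have "w \<in> PN V E w D"
    using assms w unfolding PN_def cnbhd_def cnbhd_set_def independent_def by auto
  then show "PN V E w D \<noteq> {}" by auto
qed

lemma card_le_IR:
  assumes "simple_graph V E" "irredundant V E D"
  shows "card D \<le> IR V E"
proof -
  have "{card D | D. irredundant V E D} \<subseteq> card ` Pow V"
    unfolding irredundant_def by auto
  moreover have "finite V" using assms(1) unfolding simple_graph_def by auto
  ultimately have "finite {card D | D. irredundant V E D}"
    by (meson finite_Pow_iff finite_imageI finite_subset)
  then show ?thesis unfolding IR_def using assms(2) by (auto intro: Max_ge)
qed

lemma adj_sym:
  assumes "simple_graph V E" "\<forall>D. IR_set V E D \<longrightarrow> independent E D"
    and "IR_adj V E A B"
  shows "IR_adj V E B A"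
proof -
  from assms(3) obtain u v where uv: "u \<in> A" "v \<in> B" "E u v" "B = (A - {u}) \<union> {v}"
    and iA: "IR_set V E A" and iB: "IR_set V E B"
    unfolding IR_adj_def by blast
  have "independent E A" using assms(2) iA by blast
  then have "v \<notin> A" using uv unfolding independent_def by blast
  have "u \<noteq> v" using uv assms(1) unfolding simple_graph_def by blast
  have "E v u" using uv assms(1) unfolding simple_graph_def by blast
  have "A = (B - {v}) \<union> {u}" using uv \<open>v \<notin> A\<close> \<open>u \<noteq> v\<close> by auto
  then show ?thesis unfolding IR_adj_def using iA iB uv \<open>E v u\<close> by blast
qed

lemma adj_diff:
  assumes "IR_adj V E A B" "x \<in> A" "x \<notin> B" "y \<in> A" "y \<notin> B"
  shows "x = y"
  using assms unfolding IR_adj_def by auto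

lemma path2:
  assumes "simple_graph V E" "\<forall>D. IR_set V E D \<longrightarrow> independent E D"
    and "IR_graph_connected V E"
    and "card {D. IR_set V E D} \<ge> 3"
  shows "\<exists>A B C. IR_adj V E A B \<and> IR_adj V E B C \<and> A \<noteq> C"
proof (rule ccontr)
  assume nP: "\<not> ?thesis"
  have "\<exists>A B C. A \<in> {D. IR_set V E D} \<and> B \<in> {D. IR_set V E D} \<and> C \<in> {D. IR_set V E D}
        \<and> A \<noteq> B \<and> A \<noteq> C \<and> B \<noteq> C"
  proof -
    have "Suc (Suc (Suc 0)) \<le> card {D. IR_set V E D}" using assms(4) by simp
    from card_le_Suc_iff[THEN iffD1, OF this]
    obtain A S1 where h1: "{D. IR_set V E D} = insert A S1" "A \<notin> S1" "Suc (Suc 0) \<le> card S1"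
      by blast
    from card_le_Suc_iff[THEN iffD1, OF h1(3)]
    obtain B S2 where h2: "S1 = insert B S2" "B \<notin> S2" "Suc 0 \<le> card S2"
      by blast
    from card_le_Suc_iff[THEN iffD1, OF h2(3)]
    obtain C S3 where h3: "S2 = insert C S3" "C \<notin> S3"
      by blast
    define S where "S = {D. IR_set V E D}"
    have m: "A \<in> S" "B \<in> S" "C \<in> S" using h1 h2 h3 unfolding S_def[symmetric] by simp_all
    have d: "A \<noteq> B" "A \<noteq> C" "B \<noteq> C" using h1(2) h2 h3 by auto
    show ?thesis using m d unfolding S_def by (intro exI conjI)
  qed
  then obtain A B C where ABC: "IR_set V E A" "IR_set V E B" "IR_set V E C" "A \<noteq> B" "A \<noteq> C" "B \<noteq> C"
    by auto
  have "(IR_adj V E)\<^sup>*\<^sup>* A B" using assms(3) ABC unfolding IR_graph_connected_def by blast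
  then obtain D2 where e: "IR_adj V E A D2"
    using ABC(4) by (metis converse_rtranclpE)
  have e': "IR_adj V E D2 A" using adj_sym[OF assms(1,2) e] .
  have cl: "X \<in> {A, D2}" if "(IR_adj V E)\<^sup>*\<^sup>* A X" for X
    using that
  proof (induction rule: rtranclp_induct)
    case base then show ?case by simp
  next
    case (step X Y)
    show ?case
    proof (cases "X = A")
      case True
      then show ?thesis using nP e' step by blast
    next
      case False
      then have "X = D2" using step by blast
      then show ?thesis using nP e step by blast
    qed
  qed
  have "(IR_adj V E)\<^sup>*\<^sup>* A B" "(IR_adj V E)\<^sup>*\<^sup>* A C"
    using assms(3) ABC unfolding IR_graph_connected_def by blast+
  then have "B \<in> {A, D2}" "C \<in> {A, D2}" using cl by blast+
  then show False using ABC by blast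
qed

lemma indep_union2:
  assumes "independent E A" "independent E B" "M \<subseteq> A \<union> B"
    and "\<And>a b. a \<in> M \<Longrightarrow> b \<in> M \<Longrightarrow> a \<in> A - B \<Longrightarrow> b \<in> B - A \<Longrightarrow> \<not> E a b \<and> \<not> E b a"
  shows "independent E M"
  unfolding independent_def
proof (intro ballI)
  fix a b assume ab: "a \<in> M" "b \<in> M"
  show "\<not> E a b"
  proof (cases "(a \<in> A \<and> b \<in> A) \<or> (a \<in> B \<and> b \<in> B)")
    case True then show ?thesis using assms(1,2) unfolding independent_def by blast
  next
    case False
    then have "(a \<in> A - B \<and> b \<in> B - A) \<or> (b \<in> A - B \<and> a \<in> B - A)" using ab assms(3) by blast
    then show ?thesis using assms(4) ab by blast
  qed
qed

theorem lemma4p5: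
  fixes V :: "'a set" and E :: "'a \<Rightarrow> 'a \<Rightarrow> bool"
  assumes "simple_graph V E"
    and "\<forall>D. IR_set V E D \<longrightarrow> independent E D"
    and "IR_graph_connected V E"
    and "card {D. IR_set V E D} \<ge> 3"
  shows "IR_graph_has_triangle V E \<or> IR_graph_has_induced_C4 V E"
proof -
  note g = assms(1) and ind = assms(2)
  have irr: "\<And>x y. E x y \<Longrightarrow> x \<noteq> y" and sym: "\<And>x y. E x y \<Longrightarrow> E y x"
    and inV: "\<And>x y. E x y \<Longrightarrow> x \<in> V \<and> y \<in> V"
    using g unfolding simple_graph_def by blast+
  have finV: "finite V" using g unfolding simple_graph_def by blast
  obtain D1 D2 D3 where a12: "IR_adj V E D1 D2" and a23: "IR_adj V E D2 D3" and ne: "D1 \<noteq> D3"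
    using path2[OF assms] by blast
  from a12 obtain u v where uv: "u \<in> D1" "v \<in> D2" "E u v" "D2 = (D1 - {u}) \<union> {v}"
    and i1: "IR_set V E D1" and i2: "IR_set V E D2"
    unfolding IR_adj_def by blast
  from a23 obtain x y where xy: "x \<in> D2" "y \<in> D3" "E x y" "D3 = (D2 - {x}) \<union> {y}"
    and i3: "IR_set V E D3"
    unfolding IR_adj_def by blast
  have n1: "independent E D1" "independent E D2" "independent E D3" using ind i1 i2 i3 by blast+
  have V1: "D1 \<subseteq> V" "D2 \<subseteq> V" "D3 \<subseteq> V" using i1 i2 i3 unfolding IR_set_def irredundant_def by blast+
  have f1: "finite D1" using V1 finV finite_subset by blast
  have c1: "card D1 = IR V E" using i1 unfolding IR_set_def by blast
  have "v \<notin> D1" using n1(1) uv unfolding independent_def by blast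
  have "u \<noteq> v" using irr uv by blast
  have "x \<noteq> y" using irr xy by blast
  have "y \<notin> D2" using n1(2) xy \<open>x \<noteq> y\<close> unfolding independent_def by blast
  have "y \<notin> D1 - {u}" using \<open>y \<notin> D2\<close> uv by blast
  have "y \<noteq> u"
  proof
    assume "y = u"
    then show False
    proof (cases "x = v")
      case True
      then have "D3 = D1" using xy uv \<open>y = u\<close> \<open>v \<notin> D1\<close> by auto
      then show False using ne by simp
    next
      case False
      then have "v \<in> D3" "u \<in> D3" using xy uv \<open>y = u\<close> by auto
      then show False using n1(3) uv unfolding independent_def by blast
    qed
  qed
  have "y \<notin> D1" using \<open>y \<notin> D1 - {u}\<close> \<open>y \<noteq> u\<close> by blast
  show ?thesis
  proof (cases "x = v")
    case True
    have D3e: "D3 = (D1 - {u}) \<union> {y}" using xy uv True \<open>v \<notin> D1\<close> \<open>u \<noteq> v\<close> by auto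
    show ?thesis
    proof (cases "E u y")
      case True
      have "D1 = (D3 - {y}) \<union> {u}" using D3e \<open>y \<notin> D1\<close> uv by auto
      then have "IR_adj V E D3 D1" unfolding IR_adj_def using i1 i3 xy uv sym[OF True] by blast
      then show ?thesis unfolding IR_graph_has_triangle_def using a12 a23 by blast
    next
      case False
      let ?M = "insert y D1"
      have "independent E ?M"
        unfolding independent_def
      proof (intro ballI)
        fix a b assume ab: "a \<in> ?M" "b \<in> ?M"
        have s3: "D1 - {u} \<subseteq> D3" "y \<in> D3" using D3e by auto
        show "\<not> E a b"
        proof (cases "a \<in> D3 \<and> b \<in> D3")
          case True then show ?thesis using n1(3) unfolding independent_def by blast
        next
          case F: False
          show ?thesis
          proof (cases "a \<in> D1 \<and> b \<in> D1")
            case True then show ?thesis using n1(1) unfolding independent_def by blast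
          next
            case False
            then have "(a = u \<and> b = y) \<or> (a = y \<and> b = u)" using F ab s3 by blast
            then show ?thesis using \<open>\<not> E u y\<close> sym by blast
          qed
        qed
      qed
      moreover have "?M \<subseteq> V" using V1 xy by (auto simp: D3e)
      ultimately have "card ?M \<le> IR V E" using card_le_IR[OF g] indep_irr[OF g] by blast
      moreover have "card ?M = Suc (card D1)" using f1 \<open>y \<notin> D1\<close> by simp
      ultimately show ?thesis using c1 by simp
    qed
  next
    case False
    have "x \<in> D1" "x \<noteq> u" using xy uv False by auto
    have "v \<in> D3" using xy uv False by auto
    let ?M = "(D1 - {x}) \<union> {y}"
    have MV: "?M \<subseteq> V" using V1 xy by auto
    have cM: "card ?M = IR V E"
    proof -
      have "card D1 > 0" using f1 \<open>x \<in> D1\<close> card_gt_0_iff by blast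
      then show ?thesis
        using f1 \<open>y \<notin> D1\<close> \<open>x \<in> D1\<close> c1 by (simp add: card.insert_remove)
    qed
    have D3e: "D3 = (D1 - {u} - {x}) \<union> {v, y}" using xy uv False by auto
    show ?thesis
    proof (cases "E u y")
      case True
      have "irredundant V E ?M"
        unfolding irredundant_def
      proof (intro conjI ballI)
        show "?M \<subseteq> V" by fact
        fix w assume w: "w \<in> ?M"
        consider "w = y" | "w = u" | "w \<in> D1" "w \<noteq> u" "w \<noteq> x" "w \<noteq> y"
          using w by blast
        then show "PN V E w ?M \<noteq> {}"
        proof cases
          case 1
          have "x \<in> PN V E w ?M"
            using 1 n1(1) \<open>x \<in> D1\<close> xy sym inV \<open>x \<noteq> y\<close>
            unfolding PN_def cnbhd_def cnbhd_set_def independent_def by auto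
          then show ?thesis by blast
        next
          case 2
          have "v \<in> PN V E w ?M"
            using 2 n1(3) \<open>v \<in> D3\<close> uv sym inV \<open>y \<notin> D2\<close> \<open>v \<notin> D1\<close> D3e
            unfolding PN_def cnbhd_def cnbhd_set_def independent_def by auto
          then show ?thesis by blast
        next
          case 3
          have "w \<in> D3" using 3 D3e by auto
          have "w \<in> PN V E w ?M"
            using 3 n1(1) n1(3) \<open>w \<in> D3\<close> xy V1
            unfolding PN_def cnbhd_def cnbhd_set_def independent_def by auto
          then show ?thesis by blast
        qed
      qed
      then have "IR_set V E ?M" using cM unfolding IR_set_def by blast
      moreover have "\<not> independent E ?M" using True uv \<open>x \<noteq> u\<close> unfolding independent_def by blast
      ultimately show ?thesis using ind by blast
    next
      case nuy: False
      define D4 where "D4 = ?M"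
      have "independent E D4"
      proof (rule indep_union2[OF n1(1) n1(3)])
        show "D4 \<subseteq> D1 \<union> D3" unfolding D4_def using xy by auto
        fix a b assume ab: "a \<in> D4" "b \<in> D4" "a \<in> D1 - D3" "b \<in> D3 - D1"
        then have "a = u" "b = y" using D3e D4_def by auto
        then show "\<not> E a b \<and> \<not> E b a" using nuy sym by blast
      qed
      then have i4: "IR_set V E D4" using indep_irr[OF g] MV cM unfolding IR_set_def D4_def by blast
      have a14: "IR_adj V E D1 D4" unfolding IR_adj_def D4_def using i1 i4 xy \<open>x \<in> D1\<close> D4_def by blast
      have "D3 = (D4 - {u}) \<union> {v}" using D3e D4_def \<open>y \<noteq> u\<close> \<open>x \<noteq> u\<close> by auto
      then have a43: "IR_adj V E D4 D3" unfolding IR_adj_def using i4 i3 uv \<open>v \<in> D3\<close> \<open>x \<noteq> u\<close> D4_def \<open>y \<noteq> u\<close> by blast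
      have "\<not> IR_adj V E D1 D3"
        using adj_diff[of V E D1 D3 x u] \<open>x \<in> D1\<close> uv D3e \<open>x \<noteq> u\<close> \<open>x \<noteq> y\<close> False \<open>y \<noteq> u\<close> \<open>u \<noteq> v\<close> by auto
      moreover have "\<not> IR_adj V E D2 D4"
        using adj_diff[of V E D2 D4 x v] xy uv D4_def False \<open>y \<notin> D2\<close> \<open>v \<notin> D1\<close> by auto
      moreover have "distinct [D1, D2, D3, D4]"
        using uv xy D3e D4_def \<open>x \<in> D1\<close> \<open>x \<noteq> u\<close> \<open>x \<noteq> y\<close> False \<open>y \<noteq> u\<close> \<open>u \<noteq> v\<close> \<open>v \<notin> D1\<close> \<open>y \<notin> D2\<close> ne
        by auto
      ultimately have "IR_graph_has_induced_C4 V E"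
        unfolding IR_graph_has_induced_C4_def
        using a12 a23 adj_sym[OF g ind a43] adj_sym[OF g ind a14] by blast
      then show ?thesis by blast
    qed
  qed
qed

end
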